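(* Let $n,m\ge 3$ and let $G=P_n\square P_m$ be the grid graph. A set $M$ of three vertices of $G$ is a $3$-minimal if and only if all of the following hold: (i) $M$ contains at most one corner vertex; (ii) $M$ contains two boundary vertices lying on opposite sides of the grid; (iii) either $M$ consists of two vertices $(i,j)$ and $(k,j)$ on the same line with $i\neq k$ together with a third vertex $(p,q)$ with $i\le p\le k$ and $q\neq j$, or $M$ consists of two vertices $(i,j)$ and $(i,k)$ on the same line with $j\neq k$ together with a third vertex $(p,q)$ with $j\le q\le k$ and $p\neq i$.
   Context: The grid graph $P_n\square P_m$ has vertex set $\{(i,j):0\le i\le n-1,\ 0\le j\le m-1\}$, with $(i,j)$ adjacent to $(k,l)$ iff $|i-k|+|j-l|=1$; the distance is $d((i,j),(k,l))=|i-k|+|j-l|$. The first coordinate is called the horizontal coordinate and the second the vertical coordinate. A vertex $w$ resolves two vertices $u,v$ if $d(w,u)\ne d(w,v)$. A set $R$ of vertices is resolving if every pair of distinct vertices is resolved by some vertex of $R$. A minimal is a resolving set $R$ such that no $R\setminus\{v\}$, $v\in R$, is resolving; a $k$-minimal is a minimal of cardinality $k$. Corner vertices are those of degree 2, side vertices those of degree 3, interior vertices those of degree 4; boundary vertices are corner or side vertices. A horizontal line is the set of all vertices with a fixed vertical coordinate, a vertical line the set of all vertices with a fixed horizontal coordinate; two vertices are on the same line if they share a coordinate. The sides of the grid are the four lines with first coordinate $0$, first coordinate $n-1$, second coordinate $0$, second coordinate $m-1$; two sides are opposite if they share no vertex (i.e. first coordinate $0$ and $n-1$, or second coordinate $0$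 and $m-1$). "Two boundary vertices on opposite sides" means one lies on a side and the other on the opposite side. *)

theory Defs
  imports Main
begin

type_synonym vtx = "nat \<times> nat"

definition grid_V :: "nat \<Rightarrow> nat \<Rightarrow> vtx set" where
  "grid_V n m = {0..<n} \<times> {0..<m}"

definition gdist :: "vtx \<Rightarrow> vtx \<Rightarrow> nat" where
  "gdist u v = nat \<bar>int (fst u) - int (fst v)\<bar> + nat \<bar>int (snd u) - int (snd v)\<bar>"

definition grid_adj :: "vtx \<Rightarrow> vtx \<Rightarrow> bool" where
  "grid_adj u v \<longleftrightarrow> gdist u v = 1"

definition grid_degree :: "nat \<Rightarrow> nat \<Rightarrow> vtx \<Rightarrow> nat" where
  "grid_degree n m u = card {v \<in> grid_V n m. grid_adj u v}"

definition is_corner :: "nat \<Rightarrow> nat \<Rightarrow> vtx \<Rightarrow> bool" where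
  "is_corner n m u \<longleftrightarrow> u \<in> grid_V n m \<and> grid_degree n m u = 2"

definition is_side :: "nat \<Rightarrow> nat \<Rightarrow> vtx \<Rightarrow> bool" where
  "is_side n m u \<longleftrightarrow> u \<in> grid_V n m \<and> grid_degree n m u = 3"

definition is_boundary :: "nat \<Rightarrow> nat \<Rightarrow> vtx \<Rightarrow> bool" where
  "is_boundary n m u \<longleftrightarrow> is_corner n m u \<or> is_side n m u"

definition resolves :: "vtx \<Rightarrow> vtx \<Rightarrow> vtx \<Rightarrow> bool" where
  "resolves w u v \<longleftrightarrow> gdist w u \<noteq> gdist w v"

definition resolving :: "nat \<Rightarrow> nat \<Rightarrow> vtx set \<Rightarrow> bool" where
  "resolving n m R \<longleftrightarrow> R \<subseteq> grid_V n m \<and>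
     (\<forall>u\<in>grid_V n m. \<forall>v\<in>grid_V n m. u \<noteq> v \<longrightarrow> (\<exists>w\<in>R. resolves w u v))"

definition minimal_resolving :: "nat \<Rightarrow> nat \<Rightarrow> vtx set \<Rightarrow> bool" where
  "minimal_resolving n m R \<longleftrightarrow> resolving n m R \<and> (\<forall>v\<in>R. \<not> resolving n m (R - {v}))"

definition k_minimal :: "nat \<Rightarrow> nat \<Rightarrow> nat \<Rightarrow> vtx set \<Rightarrow> bool" where
  "k_minimal n m k R \<longleftrightarrow> minimal_resolving n m R \<and> card R = k"

definition on_opposite_sides :: "nat \<Rightarrow> nat \<Rightarrow> vtx \<Rightarrow> vtx \<Rightarrow> bool" where
  "on_opposite_sides n m u v \<longleftrightarrow>
     (fst u = 0 \<and> fst v = n - 1) \<or> (fst u = n - 1 \<and> fst v = 0) \<or>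
     (snd u = 0 \<and> snd v = m - 1) \<or> (snd u = m - 1 \<and> snd v = 0)"

end

theory Submission
  imports Defs
begin


lemma gdist_int: "int (gdist u v) = \<bar>int (fst u) - int (fst v)\<bar> + \<bar>int (snd u) - int (snd v)\<bar>"
  unfolding gdist_def by simp

lemma gdist_nat: "gdist (a,b) (c,d) = (if a \<le> c then c - a else a - c) + (if b \<le> d then d - b else b - d)"
  unfolding gdist_def by auto

lemma nbrs:
  assumes "(a,b) \<in> grid_V n m"
  shows "{v\<in>grid_V n m. grid_adj (a,b) v} =
    (if 0<a then {(a - 1, b)} else {}) \<union> (if a+1<n then {(a+1, b)} else {}) \<union>
    (if 0<b then {(a, b - 1)} else {}) \<union> (if b+1<m then {(a, b+1)} else {})"
  using assms
  apply (auto simp: grid_adj_def gdist_nat grid_V_def split: if_splits)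
  done

lemma degree:
  assumes "(a,b) \<in> grid_V n m"
  shows "grid_degree n m (a,b) = of_bool (0<a) + of_bool (a+1<n) + of_bool (0<b) + of_bool (b+1<m)"
  unfolding grid_degree_def nbrs[OF assms]
  by (auto simp: card_insert_if split: if_splits)



definition cor :: "nat \<Rightarrow> nat \<Rightarrow> vtx \<Rightarrow> bool" where
  "cor n m u \<longleftrightarrow> (fst u = 0 \<or> fst u = n - 1) \<and> (snd u = 0 \<or> snd u = m - 1)"

lemma corner_iff:
  assumes "n \<ge> 3" "m \<ge> 3"
  shows "is_corner n m u \<longleftrightarrow> u \<in> grid_V n m \<and> cor n m u"
proof (cases u)
  case (Pair a b)
  show ?thesis
  proof (cases "u \<in> grid_V n m")
    case True
    then have "a < n" "b < m" using Pair by (auto simp: grid_V_def)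
    then show ?thesis using True Pair assms
      by (auto simp: is_corner_def degree cor_def)
  next
    case False then show ?thesis by (simp add: is_corner_def)
  qed
qed

lemma boundary_if:
  assumes "n \<ge> 3" "m \<ge> 3" "u \<in> grid_V n m" "fst u = 0 \<or> fst u = n - 1 \<or> snd u = 0 \<or> snd u = m - 1"
  shows "is_boundary n m u"
proof (cases u)
  case (Pair a b)
  then have "a < n" "b < m" using assms by (auto simp: grid_V_def)
  then show ?thesis using assms Pair
    by (auto simp: is_boundary_def is_corner_def is_side_def degree)
qed

lemma res_pair:
  assumes "resolving n m M" "u \<in> grid_V n m" "v \<in> grid_V n m" "u \<noteq> v"
  shows "\<exists>w\<in>M. \<bar>int (fst w) - int (fst u)\<bar> + \<bar>int (snd w) - int (snd u)\<bar> \<noteq>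
                \<bar>int (fst w) - int (fst v)\<bar> + \<bar>int (snd w) - int (snd v)\<bar>"
proof -
  obtain w where "w \<in> M" "gdist w u \<noteq> gdist w v"
    using assms unfolding resolving_def resolves_def by blast
  then have "int (gdist w u) \<noteq> int (gdist w v)" by simp
  then show ?thesis using \<open>w \<in> M\<close> unfolding gdist_int by blast
qed

definition DA :: "vtx set \<Rightarrow> nat \<Rightarrow> nat \<Rightarrow> bool" where
  "DA M x y \<longleftrightarrow> (\<exists>w\<in>M. (fst w \<le> x \<and> snd w \<le> y) \<or> (x < fst w \<and> y < snd w)) \<and>
                 (\<exists>w\<in>M. (fst w \<le> x \<and> y < snd w) \<or> (x < fst w \<and> snd w \<le> y))"

lemma res_DA:
  assumes "resolving n m M" "x + 1 < n" "y + 1 < m"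
  shows "DA M x y"
proof -
  have "(x,y) \<in> grid_V n m" "(x+1,y+1) \<in> grid_V n m" "(x,y+1) \<in> grid_V n m" "(x+1,y) \<in> grid_V n m"
    using assms by (auto simp: grid_V_def)
  from res_pair[OF assms(1) this(1,2)] obtain w where w: "w \<in> M"
    "\<bar>int (fst w) - int x\<bar> + \<bar>int (snd w) - int y\<bar> \<noteq>
     \<bar>int (fst w) - int (x+1)\<bar> + \<bar>int (snd w) - int (y+1)\<bar>" by auto
  from res_pair[OF assms(1) \<open>(x,y+1) \<in> _\<close> \<open>(x+1,y) \<in> _\<close>] obtain w' where w': "w' \<in> M"
    "\<bar>int (fst w') - int x\<bar> + \<bar>int (snd w') - int (y+1)\<bar> \<noteq>
     \<bar>int (fst w') - int (x+1)\<bar> + \<bar>int (snd w') - int y\<bar>" by auto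
  have "(fst w \<le> x \<and> snd w \<le> y) \<or> (x < fst w \<and> y < snd w)" using w(2) by arith
  moreover have "(fst w' \<le> x \<and> y < snd w') \<or> (x < fst w' \<and> snd w' \<le> y)" using w'(2) by arith
  ultimately show ?thesis unfolding DA_def using w(1) w'(1) by blast
qed

lemma res_H:
  assumes "resolving n m M" "0 < x" "x + 1 < n" "y < m"
  shows "\<exists>w\<in>M. fst w \<noteq> x"
proof -
  have "(x-1,y) \<in> grid_V n m" "(x+1,y) \<in> grid_V n m" "(x-1,y) \<noteq> (x+1,y)" using assms by (auto simp: grid_V_def)
  from res_pair[OF assms(1) this] obtain w where w: "w \<in> M"
    "\<bar>int (fst w) - int (x-1)\<bar> + \<bar>int (snd w) - int y\<bar> \<noteq>
     \<bar>int (fst w) - int (x+1)\<bar> + \<bar>int (snd w) - int y\<bar>" by auto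
  have e: "int (x-1) = int x - 1" using assms(2) by simp
  have "fst w \<noteq> x" using w(2) using e assms(2) by (intro notI) simp
  then show ?thesis using w(1) by blast
qed

lemma res_V:
  assumes "resolving n m M" "0 < y" "y + 1 < m" "x < n"
  shows "\<exists>w\<in>M. snd w \<noteq> y"
proof -
  have "(x,y-1) \<in> grid_V n m" "(x,y+1) \<in> grid_V n m" "(x,y-1) \<noteq> (x,y+1)" using assms by (auto simp: grid_V_def)
  from res_pair[OF assms(1) this] obtain w where w: "w \<in> M"
    "\<bar>int (fst w) - int x\<bar> + \<bar>int (snd w) - int (y-1)\<bar> \<noteq>
     \<bar>int (fst w) - int x\<bar> + \<bar>int (snd w) - int (y+1)\<bar>" by auto
  have e: "int (y-1) = int y - 1" using assms(2) by simp
  have "snd w \<noteq> y" using w(2) using e assms(2) by (intro notI) simp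
  then show ?thesis using w(1) by blast
qed



lemma pair_res_corner:
  assumes n3: "n \<ge> 3" and m3: "m \<ge> 3" and R: "resolving n m {(a1,b1),(a2,b2)}"
    and ne: "(a1,b1) \<noteq> (a2,b2)" and b: "a1<n" "a2<n" "b1<m" "b2<m"
  shows "cor n m (a1,b1) \<and> cor n m (a2,b2)"
proof -
  have D: "\<And>x y. x+1<n \<Longrightarrow> y+1<m \<Longrightarrow> DA {(a1,b1),(a2,b2)} x y" using res_DA R by blast
  have c1: "DA {(a1,b1),(a2,b2)} 0 0" and c2: "DA {(a1,b1),(a2,b2)} 0 (m-2)"
    and c3: "DA {(a1,b1),(a2,b2)} (n-2) 0" and c4: "DA {(a1,b1),(a2,b2)} (n-2) (m-2)"
    using D n3 m3 by auto
  consider "a1\<noteq>a2 \<and> b1\<noteq>b2" | "a1=a2" | "b1=b2" by blast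
  then show ?thesis
  proof cases
    case 1
    have "DA {(a1,b1),(a2,b2)} (min a1 a2) (min b1 b2)" using D 1 b by (simp add: min_def)
    then have False using 1 unfolding DA_def min_def by (simp split: if_splits) linarith?
    then show ?thesis ..
  next
    case 2
    have bne: "b1 \<noteq> b2" using ne 2 by auto
    have "a1 = 0 \<or> a1 = n - 1"
    proof (rule ccontr)
      assume "\<not> ?thesis"
      then obtain w where "w \<in> {(a1,b1),(a2,b2)}" "fst w \<noteq> a1" using res_H[OF R, of a1 0] b m3 by auto
      then show False using 2 by auto
    qed
    then show ?thesis
    proof
      assume a0: "a1 = 0"
      have "b1 = 0 \<or> b2 = 0" using c1 a0 2 n3 m3 unfolding DA_def by auto
      moreover have "b1 = m-1 \<or> b2 = m-1" using c2 a0 2 b m3 n3 m3 unfolding DA_def by auto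
      ultimately show ?thesis using a0 2 bne n3 m3 unfolding cor_def by auto
    next
      assume a0: "a1 = n - 1"
      have "b1 = 0 \<or> b2 = 0" using c3 a0 2 n3 n3 m3 unfolding DA_def by auto
      moreover have "b1 = m-1 \<or> b2 = m-1" using c4 a0 2 b m3 n3 n3 m3 unfolding DA_def by auto
      ultimately show ?thesis using a0 2 bne n3 m3 unfolding cor_def by auto
    qed
  next
    case 3
    have ane: "a1 \<noteq> a2" using ne 3 by auto
    have "b1 = 0 \<or> b1 = m - 1"
    proof (rule ccontr)
      assume "\<not> ?thesis"
      then obtain w where "w \<in> {(a1,b1),(a2,b2)}" "snd w \<noteq> b1" using res_V[OF R, of b1 0] b n3 by auto
      then show False using 3 by auto
    qed
    then show ?thesis
    proof
      assume a0: "b1 = 0"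
      have "a1 = 0 \<or> a2 = 0" using c1 a0 3 n3 m3 unfolding DA_def by auto
      moreover have "a1 = n-1 \<or> a2 = n-1" using c3 a0 3 b n3 n3 m3 unfolding DA_def by auto
      ultimately show ?thesis using a0 3 ane n3 m3 unfolding cor_def by auto
    next
      assume a0: "b1 = m - 1"
      have "a1 = 0 \<or> a2 = 0" using c2 a0 3 m3 n3 m3 unfolding DA_def by auto
      moreover have "a1 = n-1 \<or> a2 = n-1" using c4 a0 3 b m3 n3 n3 m3 unfolding DA_def by auto
      ultimately show ?thesis using a0 3 ane n3 m3 unfolding cor_def by auto
    qed
  qed
qed



lemma res_int:
  assumes "M \<subseteq> grid_V n m"
   and "\<And>x y x' y'. x<n \<Longrightarrow> y<m \<Longrightarrow> x'<n \<Longrightarrow> y'<m \<Longrightarrow>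
        (\<forall>w\<in>M. \<bar>int (fst w) - int x\<bar> + \<bar>int (snd w) - int y\<bar> =
                \<bar>int (fst w) - int x'\<bar> + \<bar>int (snd w) - int y'\<bar>) \<Longrightarrow> x = x' \<and> y = y'"
  shows "resolving n m M"
  unfolding resolving_def resolves_def
proof (intro conjI assms(1) ballI impI)
  fix u v assume u: "u \<in> grid_V n m" and v: "v \<in> grid_V n m" and "u \<noteq> v"
  show "\<exists>w\<in>M. gdist w u \<noteq> gdist w v"
  proof (rule ccontr)
    assume "\<not> ?thesis"
    then have "\<forall>w\<in>M. int (gdist w u) = int (gdist w v)" by auto
    then have "\<forall>w\<in>M. \<bar>int (fst w) - int (fst u)\<bar> + \<bar>int (snd w) - int (snd u)\<bar> =
                \<bar>int (fst w) - int (fst v)\<bar> + \<bar>int (snd w) - int (snd v)\<bar>" unfolding gdist_int .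
    from assms(2)[OF _ _ _ _ this] u v have "fst u = fst v \<and> snd u = snd v" by (auto simp: grid_V_def)
    then show False using \<open>u \<noteq> v\<close> by (simp add: prod_eq_iff)
  qed
qed

lemma adj_corners_res:
  assumes n3: "n \<ge> 3" and m3: "m \<ge> 3" and u: "u \<in> grid_V n m" "cor n m u"
    and v: "v \<in> grid_V n m" "cor n m v" and ne: "u \<noteq> v" and l: "fst u = fst v \<or> snd u = snd v"
  shows "resolving n m {u,v}"
proof (rule res_int)
  show "{u,v} \<subseteq> grid_V n m" using u v by auto
next
  fix x y x' y' assume "x<n" "y<m" "x'<n" "y'<m" and
   h: "\<forall>w\<in>{u,v}. \<bar>int (fst w) - int x\<bar> + \<bar>int (snd w) - int y\<bar> =
                \<bar>int (fst w) - int x'\<bar> + \<bar>int (snd w) - int y'\<bar>"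
  obtain a1 b1 a2 b2 where uu: "u = (a1,b1)" and vv: "v = (a2,b2)" by fastforce
  have "a1 < n" "a2<n" "b1<m" "b2<m" using u v uu vv by (auto simp: grid_V_def)
  have hu: "\<bar>int a1 - int x\<bar> + \<bar>int b1 - int y\<bar> = \<bar>int a1 - int x'\<bar> + \<bar>int b1 - int y'\<bar>"
    using h uu by auto
  have hv: "\<bar>int a2 - int x\<bar> + \<bar>int b2 - int y\<bar> = \<bar>int a2 - int x'\<bar> + \<bar>int b2 - int y'\<bar>"
    using h vv by auto
  have cu: "(a1 = 0 \<or> a1 = n - 1) \<and> (b1 = 0 \<or> b1 = m - 1)" "(a2 = 0 \<or> a2 = n - 1) \<and> (b2 = 0 \<or> b2 = m - 1)"
    using u v uu vv by (auto simp: cor_def)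
  have l': "(a1 = a2 \<and> b1 \<noteq> b2) \<or> (b1 = b2 \<and> a1 \<noteq> a2)" using l ne uu vv by auto
  show "x = x' \<and> y = y'"
  proof (cases "a1 = a2")
    case True
    then have "b1 \<noteq> b2" using l' by auto
    then have bb: "(b1 = 0 \<and> b2 = m - 1) \<or> (b1 = m - 1 \<and> b2 = 0)" using cu by auto
    have "y = y'" using hu hv bb True \<open>y<m\<close> \<open>y'<m\<close> by (elim disjE conjE; simp add: of_nat_diff; arith)
    then show ?thesis using hu cu \<open>x<n\<close> \<open>x'<n\<close> by (elim disjE conjE; simp add: of_nat_diff; arith)
  next
    case False
    then have "b1 = b2" using l' by auto
    then have bb: "(a1 = 0 \<and> a2 = n - 1) \<or> (a1 = n - 1 \<and> a2 = 0)" using cu l' by auto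
    have "x = x'" using hu hv bb \<open>b1 = b2\<close> \<open>x<n\<close> \<open>x'<n\<close> by (elim disjE conjE; simp add: of_nat_diff; arith)
    then show ?thesis using hu cu \<open>y<m\<close> \<open>y'<m\<close> by (elim disjE conjE; simp add: of_nat_diff; arith)
  qed
qed



definition C3 :: "vtx set \<Rightarrow> bool" where
  "C3 M \<longleftrightarrow> ((\<exists>i j k p q. (i, j) \<in> M \<and> (k, j) \<in> M \<and> (p, q) \<in> M \<and> M = {(i, j), (k, j), (p, q)} \<and>
          i \<noteq> k \<and> i \<le> p \<and> p \<le> k \<and> q \<noteq> j) \<or>
      (\<exists>i j k p q. (i, j) \<in> M \<and> (i, k) \<in> M \<and> (p, q) \<in> M \<and> M = {(i, j), (i, k), (p, q)} \<and>
          j \<noteq> k \<and> j \<le> q \<and> q \<le> k \<and> p \<noteq> i))"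

lemma C3I1: "M = {(i,j),(k,j),(p,q)} \<Longrightarrow> i\<noteq>k \<Longrightarrow> i\<le>p \<Longrightarrow> p\<le>k \<Longrightarrow> q\<noteq>j \<Longrightarrow> C3 M"
  unfolding C3_def
  apply (rule disjI1)
  apply (rule exI[where x=i], rule exI[where x=j], rule exI[where x=k], rule exI[where x=p], rule exI[where x=q])
  by auto

lemma C3I2: "M = {(i,j),(i,k),(p,q)} \<Longrightarrow> j\<noteq>k \<Longrightarrow> j\<le>q \<Longrightarrow> q\<le>k \<Longrightarrow> p\<noteq>i \<Longrightarrow> C3 M"
  unfolding C3_def
  apply (rule disjI2)
  apply (rule exI[where x=i], rule exI[where x=j], rule exI[where x=k], rule exI[where x=p], rule exI[where x=q])
  by auto

lemma coreX:
  assumes n3: "n \<ge> 3" and m3: "m \<ge> 3" and M: "M = {(0,b1),(n-1,b2),(a3,b3)}"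
    and b: "b1 < m" "b2 < m" "a3 < n" "b3 < m"
    and DAh: "\<And>x y. x+1<n \<Longrightarrow> y+1<m \<Longrightarrow> DA M x y"
    and Vc: "\<And>y. 0<y \<Longrightarrow> y+1<m \<Longrightarrow> \<exists>w\<in>M. snd w \<noteq> y"
    and noadj: "\<And>u v. u\<in>M \<Longrightarrow> v\<in>M \<Longrightarrow> u\<noteq>v \<Longrightarrow> cor n m u \<Longrightarrow> cor n m v \<Longrightarrow> fst u \<noteq> fst v \<and> snd u \<noteq> snd v"
  shows "C3 M"
proof -
  consider "b1 = b2" | "b1 < b2" | "b2 < b1" by linarith
  then show ?thesis
  proof cases
    case 1
    show ?thesis
    proof (cases "b3 = b1")
      case True
      show ?thesis
      proof (cases "0 < b1 \<and> b1 + 1 < m")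
        case True
        then obtain w where "w \<in> M" "snd w \<noteq> b1" using Vc by blast
        then show ?thesis using M 1 \<open>b3 = b1\<close> by auto
      next
        case False
        then have "b1 = 0 \<or> b1 = m - 1" using b by auto
        then have "cor n m (0,b1)" "cor n m (n-1,b1)" by (auto simp: cor_def)
        moreover have "(0,b1) \<in> M" "(n-1,b1) \<in> M" "(0::nat,b1) \<noteq> (n-1,b1)" using M 1 n3 by auto
        ultimately show ?thesis using noadj by fastforce
      qed
    next
      case False
      show ?thesis by (rule C3I1[of M 0 b1 "n-1" a3 b3]) (use M 1 False b n3 in auto)
    qed
  next
    case 2
    consider "a3 = 0" | "0 < a3 \<and> a3 < n - 1" | "a3 = n - 1" using b by linarith
    then show ?thesis
    proof cases
      case 1
      have "DA M 0 (b2-1)" using DAh n3 b 2 by auto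
      then have "b3 \<ge> b2" using M 1 2 n3 by (auto simp: DA_def)
      then show ?thesis by (intro C3I2[of M 0 b1 b3 "n-1" b2]) (use M 1 2 n3 in auto)
    next
      case 3: 2
      have "DA M (a3-1) b1" "DA M a3 (b2-1)" using DAh n3 b 2 3 by auto
      then have False using M 3 2 n3 by (auto simp: DA_def)
      then show ?thesis ..
    next
      case 3
      have "DA M (n-2) b1" using DAh n3 b 2 by auto
      then have "b3 \<le> b1" using M 3 2 n3 by (auto simp: DA_def)
      then show ?thesis by (intro C3I2[of M "n-1" b3 b2 0 b1]) (use M 3 2 n3 in auto)
    qed
  next
    case 3
    consider "a3 = 0" | "0 < a3 \<and> a3 < n - 1" | "a3 = n - 1" using b by linarith
    then show ?thesis
    proof cases
      case 1
      have "DA M 0 b2" using DAh n3 b 3 by auto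
      then have "b3 \<le> b2" using M 1 3 n3 by (auto simp: DA_def)
      then show ?thesis by (intro C3I2[of M 0 b3 b1 "n-1" b2]) (use M 1 3 n3 in auto)
    next
      case 4: 2
      have "DA M (a3-1) (b1-1)" "DA M a3 b2" using DAh n3 b 3 4 by auto
      then have False using M 3 4 n3 by (auto simp: DA_def)
      then show ?thesis ..
    next
      case 4: 3
      have "DA M (n-2) (b1-1)" using DAh n3 b 3 by auto
      then have "b3 \<ge> b1" using M 3 4 n3 by (auto simp: DA_def)
      then show ?thesis by (intro C3I2[of M "n-1" b2 b3 0 b1]) (use M 3 4 n3 in auto)
    qed
  qed
qed



lemma coreY:
  assumes n3: "n \<ge> 3" and m3: "m \<ge> 3" and M: "M = {(a1,0),(a2,m-1),(a3,b3)}"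
    and b: "a1 < n" "a2 < n" "a3 < n" "b3 < m"
    and DAh: "\<And>x y. x+1<n \<Longrightarrow> y+1<m \<Longrightarrow> DA M x y"
    and Hc: "\<And>x. 0<x \<Longrightarrow> x+1<n \<Longrightarrow> \<exists>w\<in>M. fst w \<noteq> x"
    and noadj: "\<And>u v. u\<in>M \<Longrightarrow> v\<in>M \<Longrightarrow> u\<noteq>v \<Longrightarrow> cor n m u \<Longrightarrow> cor n m v \<Longrightarrow> fst u \<noteq> fst v \<and> snd u \<noteq> snd v"
  shows "C3 M"
proof -
  consider "a1 = a2" | "a1 < a2" | "a2 < a1" by linarith
  then show ?thesis
  proof cases
    case 1
    show ?thesis
    proof (cases "a3 = a1")
      case True
      show ?thesis
      proof (cases "0 < a1 \<and> a1 + 1 < n")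
        case True
        then obtain w where "w \<in> M" "fst w \<noteq> a1" using Hc by blast
        then show ?thesis using M 1 \<open>a3 = a1\<close> by auto
      next
        case False
        then have "a1 = 0 \<or> a1 = n - 1" using b by auto
        then have "cor n m (a1,0)" "cor n m (a1,m-1)" by (auto simp: cor_def)
        moreover have "(a1,0) \<in> M" "(a1,m-1) \<in> M" "(a1,0::nat) \<noteq> (a1,m-1)" using M 1 m3 by auto
        ultimately show ?thesis using noadj by fastforce
      qed
    next
      case False
      show ?thesis by (rule C3I2[of M a1 0 "m-1" a3 b3]) (use M 1 False b m3 in auto)
    qed
  next
    case 2
    consider "b3 = 0" | "0 < b3 \<and> b3 < m - 1" | "b3 = m - 1" using b by linarith
    then show ?thesis
    proof cases
      case 1
      have "DA M (a2-1) 0" using DAh m3 b 2 by auto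
      then have "a3 \<ge> a2" using M 1 2 m3 by (auto simp: DA_def)
      then show ?thesis by (intro C3I1[of M a1 0 a3 a2 "m-1"]) (use M 1 2 m3 in auto)
    next
      case 3: 2
      have "DA M a1 (b3-1)" "DA M (a2-1) b3" using DAh m3 b 2 3 by auto
      then have False using M 3 2 m3 by (auto simp: DA_def)
      then show ?thesis ..
    next
      case 3
      have "DA M a1 (m-2)" using DAh m3 b 2 by auto
      then have "a3 \<le> a1" using M 3 2 m3 by (auto simp: DA_def)
      then show ?thesis by (intro C3I1[of M a3 "m-1" a2 a1 0]) (use M 3 2 m3 in auto)
    qed
  next
    case 3
    consider "b3 = 0" | "0 < b3 \<and> b3 < m - 1" | "b3 = m - 1" using b by linarith
    then show ?thesis
    proof cases
      case 1
      have "DA M a2 0" using DAh m3 b 3 by auto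
      then have "a3 \<le> a2" using M 1 3 m3 by (auto simp: DA_def)
      then show ?thesis by (intro C3I1[of M a3 0 a1 a2 "m-1"]) (use M 1 3 m3 in auto)
    next
      case 4: 2
      have "DA M (a1-1) (b3-1)" "DA M a2 b3" using DAh m3 b 3 4 by auto
      then have False using M 3 4 m3 by (auto simp: DA_def)
      then show ?thesis ..
    next
      case 4: 3
      have "DA M (a1-1) (m-2)" using DAh m3 b 3 by auto
      then have "a3 \<ge> a1" using M 3 4 m3 by (auto simp: DA_def)
      then show ?thesis by (intro C3I1[of M a2 "m-1" a3 a1 0]) (use M 3 4 m3 in auto)
    qed
  qed
qed



lemma decA:
  fixes I J K P Q X Y X' Y' N :: int
  assumes "\<bar>I-X\<bar>+\<bar>J-Y\<bar> = \<bar>I-X'\<bar>+\<bar>J-Y'\<bar>" "\<bar>K-X\<bar>+\<bar>J-Y\<bar> = \<bar>K-X'\<bar>+\<bar>J-Y'\<bar>"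
    "\<bar>P-X\<bar>+\<bar>Q-Y\<bar> = \<bar>P-X'\<bar>+\<bar>Q-Y'\<bar>" "Q \<noteq> J"
    "I = 0" "K = N - 1" "0 \<le> X" "X \<le> N - 1" "0 \<le> X'" "X' \<le> N - 1"
  shows "X = X' \<and> Y = Y'"
proof -
  have "X = X'" using assms(1,2,5-10) by arith
  then show ?thesis using assms(1,3,4) by auto
qed

lemma decB:
  fixes I J K P Q X Y X' Y' Mm :: int
  assumes "\<bar>I-X\<bar>+\<bar>J-Y\<bar> = \<bar>I-X'\<bar>+\<bar>J-Y'\<bar>" "\<bar>K-X\<bar>+\<bar>J-Y\<bar> = \<bar>K-X'\<bar>+\<bar>J-Y'\<bar>"
    "\<bar>P-X\<bar>+\<bar>Q-Y\<bar> = \<bar>P-X'\<bar>+\<bar>Q-Y'\<bar>" "I < K" "I \<le> P" "P \<le> K"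
    "J = 0" "Q = Mm - 1" "0 \<le> Y" "Y \<le> Mm - 1" "0 \<le> Y'" "Y' \<le> Mm - 1"
  shows "X = X' \<and> Y = Y'"
  using assms by smt

lemma decC:
  fixes I J K P Q X Y X' Y' Mm :: int
  assumes "\<bar>I-X\<bar>+\<bar>J-Y\<bar> = \<bar>I-X'\<bar>+\<bar>J-Y'\<bar>" "\<bar>K-X\<bar>+\<bar>J-Y\<bar> = \<bar>K-X'\<bar>+\<bar>J-Y'\<bar>"
    "\<bar>P-X\<bar>+\<bar>Q-Y\<bar> = \<bar>P-X'\<bar>+\<bar>Q-Y'\<bar>" "I < K" "I \<le> P" "P \<le> K"
    "J = Mm - 1" "Q = 0" "0 \<le> Y" "Y \<le> Mm - 1" "0 \<le> Y'" "Y' \<le> Mm - 1"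
  shows "X = X' \<and> Y = Y'"
  using assms by smt

lemma dec:
  fixes I J K P Q X Y X' Y' N Mm :: int
  assumes "\<bar>I-X\<bar>+\<bar>J-Y\<bar> = \<bar>I-X'\<bar>+\<bar>J-Y'\<bar>" "\<bar>K-X\<bar>+\<bar>J-Y\<bar> = \<bar>K-X'\<bar>+\<bar>J-Y'\<bar>"
    "\<bar>P-X\<bar>+\<bar>Q-Y\<bar> = \<bar>P-X'\<bar>+\<bar>Q-Y'\<bar>" "I < K" "I \<le> P" "P \<le> K" "Q \<noteq> J"
    "0 \<le> X" "X \<le> N - 1" "0 \<le> X'" "X' \<le> N - 1"
    "0 \<le> Y" "Y \<le> Mm - 1" "0 \<le> Y'" "Y' \<le> Mm - 1"
    "(I = 0 \<and> K = N - 1) \<or> (J = 0 \<and> Q = Mm - 1) \<or> (J = Mm - 1 \<and> Q = 0)"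
  shows "X = X' \<and> Y = Y'"
  using assms(16)
proof (elim disjE conjE)
  assume "I = 0" "K = N - 1" then show ?thesis using decA[OF assms(1-3,7)] assms by blast
next
  assume "J = 0" "Q = Mm - 1" then show ?thesis using decB[OF assms(1-6)] assms by blast
next
  assume "J = Mm - 1" "Q = 0" then show ?thesis using decC[OF assms(1-6)] assms by blast
qed

lemma resH:
  assumes MV: "M \<subseteq> grid_V n m" and M: "M = {(i,j),(k,j),(p,q)}" and o: "i<k" "i\<le>p" "p\<le>k" "q\<noteq>j"
    and cond: "(i=0 \<and> k=n-1) \<or> (j=0 \<and> q=m-1) \<or> (j=m-1 \<and> q=0)"
  shows "resolving n m M"
proof (rule res_int[OF MV])
  fix x y x' y' assume bd: "x<n" "y<m" "x'<n" "y'<m"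
   and h: "\<forall>w\<in>M. \<bar>int (fst w) - int x\<bar> + \<bar>int (snd w) - int y\<bar> =
                \<bar>int (fst w) - int x'\<bar> + \<bar>int (snd w) - int y'\<bar>"
  have e: "\<bar>int i - int x\<bar> + \<bar>int j - int y\<bar> = \<bar>int i - int x'\<bar> + \<bar>int j - int y'\<bar>"
    "\<bar>int k - int x\<bar> + \<bar>int j - int y\<bar> = \<bar>int k - int x'\<bar> + \<bar>int j - int y'\<bar>"
    "\<bar>int p - int x\<bar> + \<bar>int q - int y\<bar> = \<bar>int p - int x'\<bar> + \<bar>int q - int y'\<bar>"
    using h M by auto
  have n0: "n > 0" "m > 0" using bd by auto
  have c': "(int i = 0 \<and> int k = int n - 1) \<or> (int j = 0 \<and> int q = int m - 1) \<or> (int j = int m - 1 \<and> int q = 0)"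
    using cond n0 by (auto simp: of_nat_diff)
  have "int x = int x' \<and> int y = int y'"
    by (rule dec[OF e _ _ _ _ _ _ _ _ _ _ _ _ c']) (use o bd in auto)
  then show "x = x' \<and> y = y'" by simp
qed

lemma resV:
  assumes MV: "M \<subseteq> grid_V n m" and M: "M = {(i,j),(i,k),(p,q)}" and o: "j<k" "j\<le>q" "q\<le>k" "p\<noteq>i"
    and cond: "(j=0 \<and> k=m-1) \<or> (i=0 \<and> p=n-1) \<or> (i=n-1 \<and> p=0)"
  shows "resolving n m M"
proof (rule res_int[OF MV])
  fix x y x' y' assume bd: "x<n" "y<m" "x'<n" "y'<m"
   and h: "\<forall>w\<in>M. \<bar>int (fst w) - int x\<bar> + \<bar>int (snd w) - int y\<bar> =
                \<bar>int (fst w) - int x'\<bar> + \<bar>int (snd w) - int y'\<bar>"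
  have e: "\<bar>int j - int y\<bar> + \<bar>int i - int x\<bar> = \<bar>int j - int y'\<bar> + \<bar>int i - int x'\<bar>"
    "\<bar>int k - int y\<bar> + \<bar>int i - int x\<bar> = \<bar>int k - int y'\<bar> + \<bar>int i - int x'\<bar>"
    "\<bar>int q - int y\<bar> + \<bar>int p - int x\<bar> = \<bar>int q - int y'\<bar> + \<bar>int p - int x'\<bar>"
    using h M by (auto simp: add.commute)
  have n0: "n > 0" "m > 0" using bd by auto
  have c': "(int j = 0 \<and> int k = int m - 1) \<or> (int i = 0 \<and> int p = int n - 1) \<or> (int i = int n - 1 \<and> int p = 0)"
    using cond n0 by (auto simp: of_nat_diff)
  have "int y = int y' \<and> int x = int x'"
    by (rule dec[OF e _ _ _ _ _ _ _ _ _ _ _ _ c']) (use o bd in auto)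
  then show "x = x' \<and> y = y'" by simp
qed



lemma C3_corners:
  assumes C: "C3 M" and MV: "M \<subseteq> grid_V n m" and n3: "n \<ge> 3" and m3: "m \<ge> 3"
    and noadj: "\<And>u v. u\<in>M \<Longrightarrow> v\<in>M \<Longrightarrow> u\<noteq>v \<Longrightarrow> cor n m u \<Longrightarrow> cor n m v \<Longrightarrow> fst u \<noteq> fst v \<and> snd u \<noteq> snd v"
    and ab: "a \<in> M" "b \<in> M" "a \<noteq> b" "cor n m a" "cor n m b"
  shows False
  using C unfolding C3_def
proof (elim disjE exE conjE)
  fix i j k p q assume M: "M = {(i, j), (k, j), (p, q)}" and o: "i \<noteq> k" "i \<le> p" "p \<le> k" "q \<noteq> j"
  have kn: "k < n" using MV M by (auto simp: grid_V_def)
  have nAB: "\<not> (cor n m (i,j) \<and> cor n m (k,j))" using noadj[of "(i,j)" "(k,j)"] M o by auto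
  have nAC: "cor n m (i,j) \<Longrightarrow> cor n m (p,q) \<Longrightarrow> i \<noteq> p" using noadj[of "(i,j)" "(p,q)"] M o by auto
  have nBC: "cor n m (k,j) \<Longrightarrow> cor n m (p,q) \<Longrightarrow> k \<noteq> p" using noadj[of "(k,j)" "(p,q)"] M o by auto
  show False using ab M o kn nAB nAC nBC n3 unfolding cor_def by auto
next
  fix i j k p q assume M: "M = {(i, j), (i, k), (p, q)}" and o: "j \<noteq> k" "j \<le> q" "q \<le> k" "p \<noteq> i"
  have kn: "k < m" using MV M by (auto simp: grid_V_def)
  have nAB: "\<not> (cor n m (i,j) \<and> cor n m (i,k))" using noadj[of "(i,j)" "(i,k)"] M o by auto
  have nAC: "cor n m (i,j) \<Longrightarrow> cor n m (p,q) \<Longrightarrow> j \<noteq> q" using noadj[of "(i,j)" "(p,q)"] M o by auto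
  have nBC: "cor n m (i,k) \<Longrightarrow> cor n m (p,q) \<Longrightarrow> k \<noteq> q" using noadj[of "(i,k)" "(p,q)"] M o by auto
  show False using ab M o kn nAB nAC nBC m3 unfolding cor_def by auto
qed

lemma C3_res:
  assumes C: "C3 M" and MV: "M \<subseteq> grid_V n m" and n3: "n \<ge> 3" and m3: "m \<ge> 3"
    and opp: "u \<in> M" "v \<in> M" "on_opposite_sides n m u v"
  shows "resolving n m M"
  using C unfolding C3_def
proof (elim disjE exE conjE)
  fix i j k p q assume M: "M = {(i, j), (k, j), (p, q)}" and o: "i \<noteq> k" "i \<le> p" "p \<le> k" "q \<noteq> j"
  have bd: "k < n" "j < m" "q < m" using MV M by (auto simp: grid_V_def)
  have "(i=0 \<and> k=n-1) \<or> (j=0 \<and> q=m-1) \<or> (j=m-1 \<and> q=0)"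
    using opp M o bd n3 m3 unfolding on_opposite_sides_def by auto
  then show ?thesis using resH[OF MV M] o by auto
next
  fix i j k p q assume M: "M = {(i, j), (i, k), (p, q)}" and o: "j \<noteq> k" "j \<le> q" "q \<le> k" "p \<noteq> i"
  have bd: "k < m" "i < n" "p < n" using MV M by (auto simp: grid_V_def)
  have "(j=0 \<and> k=m-1) \<or> (i=0 \<and> p=n-1) \<or> (i=n-1 \<and> p=0)"
    using opp M o bd n3 m3 unfolding on_opposite_sides_def by auto
  then show ?thesis using resV[OF MV M] o by auto
qed



theorem theorem2:
  fixes n m :: nat and M :: "vtx set"
  assumes "n \<ge> 3" and "m \<ge> 3"
    and "M \<subseteq> grid_V n m" and "card M = 3"
  shows "k_minimal n m 3 M \<longleftrightarrow>
    (card {u \<in> M. is_corner n m u} \<le> 1 \<and>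
     (\<exists>u\<in>M. \<exists>v\<in>M. is_boundary n m u \<and> is_boundary n m v \<and> on_opposite_sides n m u v) \<and>
     ((\<exists>i j k p q. (i, j) \<in> M \<and> (k, j) \<in> M \<and> (p, q) \<in> M \<and> M = {(i, j), (k, j), (p, q)} \<and>
          i \<noteq> k \<and> i \<le> p \<and> p \<le> k \<and> q \<noteq> j) \<or>
      (\<exists>i j k p q. (i, j) \<in> M \<and> (i, k) \<in> M \<and> (p, q) \<in> M \<and> M = {(i, j), (i, k), (p, q)} \<and>
          j \<noteq> k \<and> j \<le> q \<and> q \<le> k \<and> p \<noteq> i)))"
proof -
  note n3 = assms(1) and m3 = assms(2) and MV = assms(3) and c3 = assms(4)
  have fin: "finite M" by (rule card_ge_0_finite) (simp add: c3)
  obtain x y z where M3: "M = {x,y,z}" "x \<noteq> y" "y \<noteq> z" "x \<noteq> z" using c3[unfolded card_3_iff] by blast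
  have inV: "\<And>u. u \<in> M \<Longrightarrow> fst u < n \<and> snd u < m" using MV by (auto simp: grid_V_def)
  have cornerM: "\<And>u. u \<in> M \<Longrightarrow> is_corner n m u \<longleftrightarrow> cor n m u" using corner_iff[OF n3 m3] MV by auto
  have third: "\<And>u v. u \<in> M \<Longrightarrow> v \<in> M \<Longrightarrow> u \<noteq> v \<Longrightarrow> \<exists>w\<in>M. w \<noteq> u \<and> w \<noteq> v \<and> M = {u,v,w} \<and> M - {w} = {u,v}"
  proof -
    fix u v assume uv: "u \<in> M" "v \<in> M" "u \<noteq> v"
    have "card {u,v} = 2" using uv by simp
    then have "\<not> M \<subseteq> {u,v}" using c3 card_mono[of "{u,v}" M] by fastforce
    then obtain w where w: "w\<in>M" "w\<noteq>u" "w\<noteq>v" by blast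
    have sub: "{u,v,w} \<subseteq> M" using uv w by auto
    have "card {u,v,w} = 3" using uv w by simp
    then have e: "{u,v,w} = M" using card_subset_eq[OF fin sub] c3 by simp
    have "M - {w} = {u,v}" using e[symmetric] w uv by auto
    then show "\<exists>w\<in>M. w \<noteq> u \<and> w \<noteq> v \<and> M = {u,v,w} \<and> M - {w} = {u,v}" using w e by blast
  qed
  have two: "\<And>w. w \<in> M \<Longrightarrow> \<exists>u v. u \<in> M \<and> v \<in> M \<and> u \<noteq> v \<and> M - {w} = {u,v}"
  proof -
    fix w assume w: "w \<in> M"
    have "card (M - {w}) = 2" using c3 w fin by simp
    then obtain u v where "M - {w} = {u,v}" "u \<noteq> v" unfolding card_2_iff by blast
    then show "\<exists>u v. u \<in> M \<and> v \<in> M \<and> u \<noteq> v \<and> M - {w} = {u,v}" by blast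
  qed
  have iii: "(\<exists>i j k p q. (i, j) \<in> M \<and> (k, j) \<in> M \<and> (p, q) \<in> M \<and> M = {(i, j), (k, j), (p, q)} \<and>
          i \<noteq> k \<and> i \<le> p \<and> p \<le> k \<and> q \<noteq> j) \<or>
      (\<exists>i j k p q. (i, j) \<in> M \<and> (i, k) \<in> M \<and> (p, q) \<in> M \<and> M = {(i, j), (i, k), (p, q)} \<and>
          j \<noteq> k \<and> j \<le> q \<and> q \<le> k \<and> p \<noteq> i) \<longleftrightarrow> C3 M" unfolding C3_def ..
  have cardc: "card {u \<in> M. is_corner n m u} \<le> 1 \<longleftrightarrow>
      (\<forall>a\<in>M. \<forall>b\<in>M. cor n m a \<longrightarrow> cor n m b \<longrightarrow> a = b)"
  proof -
    have e: "{u \<in> M. is_corner n m u} = {u \<in> M. cor n m u}" using cornerM by auto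
    have f: "finite {u \<in> M. cor n m u}" using fin by simp
    have "card {u \<in> M. is_corner n m u} \<le> 1 \<longleftrightarrow> (\<forall>a\<in>{u \<in> M. cor n m u}. \<forall>b\<in>{u \<in> M. cor n m u}. a = b)"
      unfolding e One_nat_def by (rule card_le_Suc0_iff_eq[OF f])
    then show ?thesis by blast
  qed
  have X: "k_minimal n m 3 M \<longleftrightarrow> ((\<forall>a\<in>M. \<forall>b\<in>M. cor n m a \<longrightarrow> cor n m b \<longrightarrow> a = b) \<and>
      (\<exists>u\<in>M. \<exists>v\<in>M. is_boundary n m u \<and> is_boundary n m v \<and> on_opposite_sides n m u v) \<and> C3 M)"
  proof
    assume L: "k_minimal n m 3 M"
    then have R: "resolving n m M" and nr: "\<And>v. v \<in> M \<Longrightarrow> \<not> resolving n m (M - {v})"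
      by (auto simp: k_minimal_def minimal_resolving_def)
    have noadj: "\<And>u v. u\<in>M \<Longrightarrow> v\<in>M \<Longrightarrow> u\<noteq>v \<Longrightarrow> cor n m u \<Longrightarrow> cor n m v \<Longrightarrow> fst u \<noteq> fst v \<and> snd u \<noteq> snd v"
    proof (rule ccontr)
      fix u v assume uv: "u\<in>M" "v\<in>M" "u\<noteq>v" "cor n m u" "cor n m v" "\<not> (fst u \<noteq> fst v \<and> snd u \<noteq> snd v)"
      then have "resolving n m {u,v}" using adj_corners_res[OF n3 m3] MV by blast
      moreover obtain w where "w \<in> M" "M - {w} = {u,v}" using third[OF uv(1-3)] by blast
      ultimately show False using nr by metis
    qed
    have DAh: "\<And>x y. x+1<n \<Longrightarrow> y+1<m \<Longrightarrow> DA M x y" using res_DA[OF R] by blast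
    have Hc: "\<And>x. 0<x \<Longrightarrow> x+1<n \<Longrightarrow> \<exists>w\<in>M. fst w \<noteq> x" by (rule res_H[OF R, where y=0]) (use m3 in auto)
    have Vc: "\<And>y. 0<y \<Longrightarrow> y+1<m \<Longrightarrow> \<exists>w\<in>M. snd w \<noteq> y" by (rule res_V[OF R, where x=0]) (use n3 in auto)
    define A0 where "A0 = (\<exists>u\<in>M. fst u = 0)"
    define An where "An = (\<exists>u\<in>M. fst u = n - 1)"
    define B0 where "B0 = (\<exists>u\<in>M. snd u = 0)"
    define Bm where "Bm = (\<exists>u\<in>M. snd u = m - 1)"
    have s1: "\<not> A0 \<Longrightarrow> B0 \<and> Bm"
    proof -
      assume "\<not> A0"
      then have a: "\<And>u. u \<in> M \<Longrightarrow> 0 < fst u" unfolding A0_def by auto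
      have d1: "DA M 0 0" and d2: "DA M 0 (m-2)" using DAh n3 m3 by auto
      obtain w where w: "w\<in>M" "(fst w \<le> 0 \<and> 0 < snd w) \<or> (0 < fst w \<and> snd w \<le> 0)"
        using d1 unfolding DA_def by blast
      have "snd w = 0" using w a[of w] by auto
      then have B0 using w(1) unfolding B0_def by blast
      obtain w' where w': "w'\<in>M" "(fst w' \<le> 0 \<and> snd w' \<le> m-2) \<or> (0 < fst w' \<and> m-2 < snd w')"
        using d2 unfolding DA_def by blast
      have "snd w' = m - 1" using w' a[of w'] inV[of w'] by auto
      then have Bm using w'(1) unfolding Bm_def by blast
      show ?thesis using \<open>B0\<close> \<open>Bm\<close> ..
    qed
    have s2: "\<not> An \<Longrightarrow> B0 \<and> Bm"
    proof -
      assume "\<not> An"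
      then have a: "\<And>u. u \<in> M \<Longrightarrow> fst u \<le> n - 2" unfolding An_def using inV by fastforce
      have d1: "DA M (n-2) (m-2)" and d2: "DA M (n-2) 0" using DAh n3 m3 by auto
      obtain w where w: "w\<in>M" "(fst w \<le> n-2 \<and> m-2 < snd w) \<or> (n-2 < fst w \<and> snd w \<le> m-2)"
        using d1 unfolding DA_def by blast
      have "snd w = m-1" using w a[of w] inV[of w] by auto
      then have Bm using w(1) unfolding Bm_def by blast
      obtain w' where w': "w'\<in>M" "(fst w' \<le> n-2 \<and> snd w' \<le> 0) \<or> (n-2 < fst w' \<and> 0 < snd w')"
        using d2 unfolding DA_def by blast
      have "snd w' = 0" using w' a[of w'] by auto
      then have B0 using w'(1) unfolding B0_def by blast
      show ?thesis using \<open>B0\<close> \<open>Bm\<close> ..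
    qed
    have s3: "\<not> B0 \<Longrightarrow> A0 \<and> An"
    proof -
      assume "\<not> B0"
      then have a: "\<And>u. u \<in> M \<Longrightarrow> 0 < snd u" unfolding B0_def by auto
      have d1: "DA M 0 0" and d2: "DA M (n-2) 0" using DAh n3 m3 by auto
      obtain w where w: "w\<in>M" "(fst w \<le> 0 \<and> 0 < snd w) \<or> (0 < fst w \<and> snd w \<le> 0)"
        using d1 unfolding DA_def by blast
      have "fst w = 0" using w a[of w] by auto
      then have A0 using w(1) unfolding A0_def by blast
      obtain w' where w': "w'\<in>M" "(fst w' \<le> n-2 \<and> snd w' \<le> 0) \<or> (n-2 < fst w' \<and> 0 < snd w')"
        using d2 unfolding DA_def by blast
      have "fst w' = n - 1" using w' a[of w'] inV[of w'] by auto
      then have An using w'(1) unfolding An_def by blast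
      show ?thesis using \<open>A0\<close> \<open>An\<close> ..
    qed
    have s4: "\<not> Bm \<Longrightarrow> A0 \<and> An"
    proof -
      assume "\<not> Bm"
      then have a: "\<And>u. u \<in> M \<Longrightarrow> snd u \<le> m - 2" unfolding Bm_def using inV by fastforce
      have d1: "DA M 0 (m-2)" and d2: "DA M (n-2) (m-2)" using DAh n3 m3 by auto
      obtain w where w: "w\<in>M" "(fst w \<le> 0 \<and> snd w \<le> m-2) \<or> (0 < fst w \<and> m-2 < snd w)"
        using d1 unfolding DA_def by blast
      have "fst w = 0" using w a[of w] by auto
      then have A0 using w(1) unfolding A0_def by blast
      obtain w' where w': "w'\<in>M" "(fst w' \<le> n-2 \<and> m-2 < snd w') \<or> (n-2 < fst w' \<and> snd w' \<le> m-2)"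
        using d2 unfolding DA_def by blast
      have "fst w' = n - 1" using w' a[of w'] inV[of w'] by auto
      then have An using w'(1) unfolding An_def by blast
      show ?thesis using \<open>A0\<close> \<open>An\<close> ..
    qed
    have st: "(A0 \<and> An) \<or> (B0 \<and> Bm)" using s1 s2 s3 s4 by blast
    have main: "C3 M \<and> (\<exists>u\<in>M. \<exists>v\<in>M. is_boundary n m u \<and> is_boundary n m v \<and> on_opposite_sides n m u v)"
      using st
    proof
      assume "A0 \<and> An"
      then obtain u v where u: "u \<in> M" "fst u = 0" and v: "v \<in> M" "fst v = n - 1"
        unfolding A0_def An_def by blast
      have "u \<noteq> v" using u v n3 by auto
      then obtain w where w: "w \<in> M" "M = {u,v,w}" using third u v by blast
      have Me: "M = {(0, snd u), (n-1, snd v), (fst w, snd w)}" using w(2) u(2) v(2)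
        by (metis prod.collapse)
      have "C3 M"
        by (rule coreX[OF n3 m3 Me _ _ _ _ DAh Vc noadj]) (use inV u v w in auto)
      moreover have "is_boundary n m u" "is_boundary n m v"
        using boundary_if[OF n3 m3, of u] boundary_if[OF n3 m3, of v] MV u v by auto
      moreover have "on_opposite_sides n m u v" using u v by (simp add: on_opposite_sides_def)
      ultimately show ?thesis using u v by blast
    next
      assume "B0 \<and> Bm"
      then obtain u v where u: "u \<in> M" "snd u = 0" and v: "v \<in> M" "snd v = m - 1"
        unfolding B0_def Bm_def by blast
      have "u \<noteq> v" using u v m3 by auto
      then obtain w where w: "w \<in> M" "M = {u,v,w}" using third u v by blast
      have Me: "M = {(fst u, 0), (fst v, m-1), (fst w, snd w)}" using w(2) u(2) v(2)
        by (metis prod.collapse)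
      have "C3 M"
        by (rule coreY[OF n3 m3 Me _ _ _ _ DAh Hc noadj]) (use inV u v w in auto)
      moreover have "is_boundary n m u" "is_boundary n m v"
        using boundary_if[OF n3 m3, of u] boundary_if[OF n3 m3, of v] MV u v by auto
      moreover have "on_opposite_sides n m u v" using u v by (simp add: on_opposite_sides_def)
      ultimately show ?thesis using u v by blast
    qed
    have "\<forall>a\<in>M. \<forall>b\<in>M. cor n m a \<longrightarrow> cor n m b \<longrightarrow> a = b"
      using C3_corners[OF _ MV n3 m3 noadj] main by blast
    then show "(\<forall>a\<in>M. \<forall>b\<in>M. cor n m a \<longrightarrow> cor n m b \<longrightarrow> a = b) \<and>
      (\<exists>u\<in>M. \<exists>v\<in>M. is_boundary n m u \<and> is_boundary n m v \<and> on_opposite_sides n m u v) \<and> C3 M"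
      using main by blast
  next
    assume Rh: "(\<forall>a\<in>M. \<forall>b\<in>M. cor n m a \<longrightarrow> cor n m b \<longrightarrow> a = b) \<and>
      (\<exists>u\<in>M. \<exists>v\<in>M. is_boundary n m u \<and> is_boundary n m v \<and> on_opposite_sides n m u v) \<and> C3 M"
    then obtain u v where uv: "u \<in> M" "v \<in> M" "on_opposite_sides n m u v" by blast
    have R: "resolving n m M" using C3_res[OF _ MV n3 m3 uv] Rh by blast
    have "\<not> resolving n m (M - {w})" if w: "w \<in> M" for w
    proof
      assume Rw: "resolving n m (M - {w})"
      obtain a b where ab: "a \<in> M" "b \<in> M" "a \<noteq> b" "M - {w} = {a,b}" using two[OF w] by blast
      obtain a1 b1 a2 b2 where aa: "a = (a1,b1)" "b = (a2,b2)" by fastforce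
      have Rw': "resolving n m {(a1,b1),(a2,b2)}" using Rw ab(4) aa by simp
      have bd: "a1 < n" "b1 < m" "a2 < n" "b2 < m" using inV[OF ab(1)] inV[OF ab(2)] aa by auto
      have "cor n m (a1,b1) \<and> cor n m (a2,b2)"
        by (rule pair_res_corner[OF n3 m3 Rw']) (use ab(3) aa bd in auto)
      then have "cor n m a \<and> cor n m b" using aa by simp
      then show False using Rh ab by blast
    qed
    then show "k_minimal n m 3 M" unfolding k_minimal_def minimal_resolving_def using R c3 by blast
  qed
  show ?thesis using X iii cardc by argo
qed

end
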